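(* Let $C\subseteq\mathbb{R}^q$ be a nonempty closed convex cone that is not a linear subspace, $\mathcal{X}\subseteq\mathbb{R}^m$ a nonempty convex set, and $\Gamma:\mathbb{R}^m\to\mathbb{R}^q$ a $C$-convex map. Let $k\in\operatorname{ri} C$ and $e^1,\dots,e^{q-1}\in\mathbb{R}^q$ such that $e^1,\dots,e^{q-1},k$ are linearly independent; let $E=(e^1,\dots,e^{q-1})$ and $T=(e^1,\dots,e^{q-1},k)$. Let $\varphi(y)=\inf\{r\in\mathbb{R} : rk-y\in C\}$ and $f(z)=\inf_{x\in\mathcal{X}}\varphi(\Gamma(x)-Ez)$ for $z\in\mathbb{R}^{q-1}$. For $w\in\mathbb{R}^{q-1}$ let $c^*(w)=T^{-T}\begin{pmatrix}w\\1\end{pmatrix}$. Then the conjugate of $f$ is $$f^*(w)=\begin{cases}\left[\langle c^*(-w),\Gamma(\cdot)\rangle+\delta_{\mathcal{X}}\right]^*(0) & \text{if } c^*(-w)\in C^+,\\ +\infty & \text{otherwise,}\end{cases}$$ where $C^+=\{c^*\in\mathbb{R}^q : \langle c^*,c\rangle\ge 0\ \forall c\in C\}$.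
   Context: $\Gamma$ is $C$-convex if $(1-t)\Gamma(x_1)+t\Gamma(x_2)-\Gamma((1-t)x_1+tx_2)\in C$ for all $x_1,x_2$, $t\in[0,1]$. $\delta_{\mathcal{X}}$ is the indicator function of $\mathcal{X}$; $g^*(p)=\sup_x(\langle p,x\rangle-g(x))$ denotes the Legendre–Fenchel conjugate, so $[\langle c,\Gamma\rangle+\delta_{\mathcal{X}}]^*(0)=-\inf_{x\in\mathcal{X}}\langle c,\Gamma(x)\rangle$. $T^{-T}$ is the inverse of the transpose of $T$. *)

theory Defs
  imports "HOL-Analysis.Analysis"
begin

text \<open>R^q is modelled as real^('p option) with 'p of cardinality q-1, so that
  R^{q-1} = real^'p and the index None corresponds to the last coordinate.\<close>

definition C_convex :: "('b::real_vector) set \<Rightarrow> ('a::real_vector \<Rightarrow> 'b) \<Rightarrow> bool" where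
  "C_convex C \<Gamma> \<longleftrightarrow> (\<forall>x1 x2 t. 0 \<le> t \<and> t \<le> 1 \<longrightarrow>
     (1 - t) *\<^sub>R \<Gamma> x1 + t *\<^sub>R \<Gamma> x2 - \<Gamma> ((1 - t) *\<^sub>R x1 + t *\<^sub>R x2) \<in> C)"

definition dual_cone_plus :: "('a::real_inner) set \<Rightarrow> 'a set" where
  "dual_cone_plus C = {c. \<forall>x\<in>C. 0 \<le> inner c x}"

definition lf_conjugate :: "('a::real_inner \<Rightarrow> ereal) \<Rightarrow> 'a \<Rightarrow> ereal" where
  "lf_conjugate g p = (SUP x. ereal (inner p x) - g x)"

definition ind_fn :: "'a set \<Rightarrow> 'a \<Rightarrow> ereal" where
  "ind_fn X x = (if x \<in> X then 0 else \<infinity>)"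

definition scal_phi :: "('a::real_vector) set \<Rightarrow> 'a \<Rightarrow> 'a \<Rightarrow> ereal" where
  "scal_phi C k y = Inf {ereal r | r. r *\<^sub>R k - y \<in> C}"

definition matT :: "real^'p^('p option) \<Rightarrow> real^('p option) \<Rightarrow> real^('p option)^('p option)" where
  "matT E k = (\<chi> i j. case j of Some j' \<Rightarrow> E $ i $ j' | None \<Rightarrow> k $ i)"

definition cstar :: "real^'p^('p option) \<Rightarrow> real^('p option) \<Rightarrow> real^'p \<Rightarrow> real^('p option)" where
  "cstar E k w = matrix_inv (transpose (matT E k)) *v
      (\<chi> j. case j of Some j' \<Rightarrow> w $ j' | None \<Rightarrow> 1)"

end

theory Submission
  imports Defs
begin


lemma sum_option: "(\<Sum>j\<in>(UNIV::'p::finite option set). g j) = g None + (\<Sum>j\<in>UNIV. g (Some j))"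
proof -
  have "sum g (insert None (range Some)) = g None + (\<Sum>j\<in>UNIV. g (Some j))"
    by (simp add: sum.reindex image_iff)
  then show ?thesis by (simp only: UNIV_option_conv[symmetric])
qed

lemma matT_mv: "matT E k *v a = E *v (\<chi> j. a $ Some j) + (a $ None) *\<^sub>R k"
  by (simp add: vec_eq_iff matrix_vector_mult_def matT_def sum_option algebra_simps)

lemma inner_trans: "inner (c::real^'m) ((A::real^'n^'m) *v a) = inner (transpose A *v c) a"
  by (metis dot_lmul_matrix transpose_transpose vector_transpose_matrix)

lemma inner_v: "inner (\<chi> j. case j of Some j' \<Rightarrow> (u::real^'p::finite) $ j' | None \<Rightarrow> 1) (a::real^('p option))
   = inner u (\<chi> j. a $ Some j) + a $ None"
  by (simp add: inner_vec_def sum_option add.commute)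

lemma T_inv:
  assumes "\<forall>a. (\<Sum>j\<in>UNIV. a j *\<^sub>R column j (matT E k)) = 0 \<longrightarrow> (\<forall>j. a j = 0)"
  shows "invertible (matT E k)"
proof -
  have "\<forall>x. matT E k *v x = 0 \<longrightarrow> x = 0"
  proof (intro allI impI)
    fix x assume "matT E k *v x = 0"
    then have "(\<Sum>j\<in>UNIV. (x $ j) *\<^sub>R column j (matT E k)) = 0"
      by (simp add: matrix_mult_sum scalar_mult_eq_scaleR)
    with assms have "\<forall>j. x $ j = 0" by blast
    then show "x = 0" by (simp add: vec_eq_iff)
  qed
  then show ?thesis using matrix_left_invertible_ker invertible_left_inverse by blast
qed

lemma cstar_eq:
  assumes "invertible (matT E k)"
  shows "transpose (matT E k) *v cstar E k u = (\<chi> j. case j of Some j' \<Rightarrow> u $ j' | None \<Rightarrow> 1)"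
proof -
  let ?A = "transpose (matT E k)"
  have "invertible ?A" using assms transpose_invertible by blast
  then have "\<exists>A'. ?A ** A' = mat 1 \<and> A' ** ?A = mat 1" by (simp add: invertible_def)
  then have "?A ** matrix_inv ?A = mat 1" unfolding matrix_inv_def by (rule someI_ex[THEN conjunct1])
  then show ?thesis unfolding cstar_def by (simp add: matrix_vector_mul_assoc)
qed

lemma surjT:
  assumes "invertible (matT E k)"
  shows "\<exists>z r. y = E *v z + r *\<^sub>R k"
proof -
  obtain A' where "matT E k ** A' = mat 1" using assms invertible_def by blast
  then have "matT E k *v (A' *v y) = y" by (simp add: matrix_vector_mul_assoc)
  then show ?thesis by (metis matT_mv)
qed


theorem proposition5p5:
  fixes C :: "(real^('p::finite option)) set"
    and X :: "(real^('m::finite)) set"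
    and \<Gamma> :: "real^'m \<Rightarrow> real^('p option)"
    and k :: "real^('p option)"
    and E :: "real^'p^('p option)"
    and f :: "real^'p \<Rightarrow> ereal"
  assumes "C \<noteq> {}" "closed C" "convex C" "cone C" "\<not> subspace C"
    and "X \<noteq> {}" "convex X"
    and "C_convex C \<Gamma>"
    and "k \<in> rel_interior C"
    and "\<forall>a. (\<Sum>j\<in>UNIV. a j *\<^sub>R column j (matT E k)) = 0 \<longrightarrow> (\<forall>j. a j = 0)"
    and "\<forall>z. f z = (INF x\<in>X. scal_phi C k (\<Gamma> x - E *v z))"
  shows "lf_conjugate f w =
    (if cstar E k (-w) \<in> dual_cone_plus C
     then lf_conjugate (\<lambda>x. ereal (inner (cstar E k (-w)) (\<Gamma> x)) + ind_fn X x) 0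
     else \<infinity>)"
proof -
  have inv: "invertible (matT E k)" using assms(10) by (rule T_inv)
  define c where "c = cstar E k (-w)"
  have ct: "transpose (matT E k) *v c = (\<chi> j. case j of Some j' \<Rightarrow> (-w) $ j' | None \<Rightarrow> 1)"
    unfolding c_def by (rule cstar_eq[OF inv])
  have key: "inner c (E *v z + r *\<^sub>R k) = r - inner w z" for z r
  proof -
    have e: "(\<chi> j. (\<chi> j. case j of Some j' \<Rightarrow> z $ j' | None \<Rightarrow> r) $ Some j) = z"
      by (simp add: vec_eq_iff)
    have "E *v z + r *\<^sub>R k = matT E k *v (\<chi> j. case j of Some j' \<Rightarrow> z $ j' | None \<Rightarrow> r)"
      by (simp only: matT_mv e) simp
    then have "inner c (E *v z + r *\<^sub>R k) = inner (transpose (matT E k) *v c) (\<chi> j. case j of Some j' \<Rightarrow> z $ j' | None \<Rightarrow> r)"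
      by (simp only: inner_trans)
    also have "\<dots> = inner (-w) z + r" by (simp only: ct inner_v e) simp
    finally show ?thesis by simp
  qed
  have C0: "0 \<in> C" using assms(1,4) unfolding cone_def by (metis scale_zero_left ex_in_conv order_refl)
  have up: "scal_phi C k y \<le> ereal r" if "r *\<^sub>R k - y \<in> C" for y r
    unfolding scal_phi_def using that by (intro Inf_lower) blast
  have fle: "f z \<le> scal_phi C k (\<Gamma> x - E *v z)" if "x \<in> X" for x z
    unfolding assms(11)[rule_format] using that by (rule INF_lower)
  have supf: "ereal (inner w z) - f z = (SUP x\<in>X. ereal (inner w z) - scal_phi C k (\<Gamma> x - E *v z))" for z
    using assms(11) SUP_ereal_minus_right[OF assms(6), of "ereal (inner w z)"] by simp
  have lhs: "lf_conjugate f w = (SUP z. ereal (inner w z) - f z)" unfolding lf_conjugate_def by simp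
  show ?thesis
  proof (cases "c \<in> dual_cone_plus C")
    case True
    define R where "R = (SUP x\<in>X. ereal (- inner c (\<Gamma> x)))"
    have low: "scal_phi C k (\<Gamma> x - E *v z) \<ge> ereal (inner c (\<Gamma> x) + inner w z)" for x z
      unfolding scal_phi_def
    proof (rule Inf_greatest, clarify)
      fix r assume rC: "r *\<^sub>R k - (\<Gamma> x - E *v z) \<in> C"
      have "0 \<le> inner c (r *\<^sub>R k - (\<Gamma> x - E *v z))" using True rC unfolding dual_cone_plus_def by blast
      also have "r *\<^sub>R k - (\<Gamma> x - E *v z) = (E *v z + r *\<^sub>R k) - \<Gamma> x" by simp
      finally have "0 \<le> inner c (E *v z + r *\<^sub>R k) - inner c (\<Gamma> x)" by (simp add: inner_diff_right)
      then show "ereal (inner c (\<Gamma> x) + inner w z) \<le> ereal r" using key[of z r] by simp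
    qed
    have 1: "lf_conjugate f w \<le> R"
      unfolding lhs
    proof (rule SUP_least)
      fix z
      show "ereal (inner w z) - f z \<le> R" unfolding supf
      proof (rule SUP_least)
        fix x assume x: "x \<in> X"
        have "ereal (inner w z) - scal_phi C k (\<Gamma> x - E *v z) \<le> ereal (inner w z) - ereal (inner c (\<Gamma> x) + inner w z)"
          by (rule ereal_minus_mono[OF order_refl low])
        also have "\<dots> = ereal (- inner c (\<Gamma> x))" by simp
        also have "\<dots> \<le> R" unfolding R_def using x by (rule SUP_upper)
        finally show "ereal (inner w z) - scal_phi C k (\<Gamma> x - E *v z) \<le> R" .
      qed
    qed
    have 2: "R \<le> lf_conjugate f w"
      unfolding R_def
    proof (rule SUP_least)
      fix x assume x: "x \<in> X"
      obtain z r where zr: "\<Gamma> x = E *v z + r *\<^sub>R k" using surjT[OF inv] by blast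
      have "scal_phi C k (\<Gamma> x - E *v z) \<le> ereal r" by (rule up) (simp add: zr C0)
      then have "f z \<le> ereal r" using fle[OF x, of z] by simp
      then have "ereal (inner w z) - ereal r \<le> ereal (inner w z) - f z"
        by (rule ereal_minus_mono[OF order_refl])
      moreover have "ereal (- inner c (\<Gamma> x)) = ereal (inner w z) - ereal r" using key[of z r] zr by simp
      ultimately show "ereal (- inner c (\<Gamma> x)) \<le> lf_conjugate f w" unfolding lhs
        by (metis (mono_tags, lifting) SUP_upper2 UNIV_I)
    qed
    have 3: "lf_conjugate (\<lambda>x. ereal (inner c (\<Gamma> x)) + ind_fn X x) 0 = R"
      unfolding lf_conjugate_def
    proof (rule antisym)
      show "(SUP x. ereal (inner 0 x) - (ereal (inner c (\<Gamma> x)) + ind_fn X x)) \<le> R"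
      proof (rule SUP_least)
        fix x
        show "ereal (inner 0 x) - (ereal (inner c (\<Gamma> x)) + ind_fn X x) \<le> R"
        proof (cases "x \<in> X")
          case True
          then show ?thesis unfolding R_def ind_fn_def
            by (simp add: SUP_upper2 zero_ereal_def)
        next
          case False
          then show ?thesis unfolding ind_fn_def by simp
        qed
      qed
      show "R \<le> (SUP x. ereal (inner 0 x) - (ereal (inner c (\<Gamma> x)) + ind_fn X x))"
        unfolding R_def
      proof (rule SUP_least)
        fix x assume "x \<in> X"
        then have ex: "ereal (- inner c (\<Gamma> x)) = ereal (inner 0 x) - (ereal (inner c (\<Gamma> x)) + ind_fn X x)"
          unfolding ind_fn_def by (simp add: zero_ereal_def)
        then show "ereal (- inner c (\<Gamma> x)) \<le> (SUP x. ereal (inner 0 x) - (ereal (inner c (\<Gamma> x)) + ind_fn X x))"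
          by (simp only: ex) (rule SUP_upper, simp)
      qed
    qed
    have eq: "lf_conjugate f w = lf_conjugate (\<lambda>x. ereal (inner c (\<Gamma> x)) + ind_fn X x) 0"
      by (rule antisym[OF 1[unfolded 3[symmetric]] 2[unfolded 3[symmetric]]])
    show ?thesis unfolding c_def[symmetric] using True eq by (simp only: if_True)
  next
    case False
    then obtain c0 where c0: "c0 \<in> C" "inner c c0 < 0" unfolding dual_cone_plus_def by force
    obtain z0 s where zs: "c0 = E *v z0 + s *\<^sub>R k" using surjT[OF inv] by blast
    define d where "d = inner w z0 - s"
    have dpos: "d > 0" using c0(2) key[of z0 s] zs d_def by simp
    obtain x0 where x0: "x0 \<in> X" using assms(6) by blast
    obtain zb r where zr: "\<Gamma> x0 = E *v zb + r *\<^sub>R k" using surjT[OF inv] by blast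
    have "lf_conjugate f w = \<infinity>"
    proof (rule ereal_top)
      fix B
      define t where "t = max 0 ((B - inner w zb + r) / d)"
      have t0: "t \<ge> 0" unfolding t_def by simp
      have td: "t * d \<ge> B - inner w zb + r" unfolding t_def using dpos
        by (metis max.cobounded2 mult.commute nonzero_mult_div_cancel_left order_less_irrefl
             mult_le_cancel_left_pos times_divide_eq_right)
      define z where "z = zb + t *\<^sub>R z0"
      have "(r + t * s) *\<^sub>R k - (\<Gamma> x0 - E *v z) = t *\<^sub>R c0"
        unfolding z_def zr zs by (simp add: algebra_simps)
      then have "(r + t * s) *\<^sub>R k - (\<Gamma> x0 - E *v z) \<in> C"
        using c0(1) t0 assms(4) unfolding cone_def by metis
      then have "f z \<le> ereal (r + t * s)" using up fle[OF x0, of z] order_trans by blast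
      then have "ereal (inner w z) - ereal (r + t * s) \<le> ereal (inner w z) - f z"
        by (rule ereal_minus_mono[OF order_refl])
      moreover have "ereal B \<le> ereal (inner w z) - ereal (r + t * s)"
        using td unfolding z_def d_def by (simp add: inner_add_right algebra_simps)
      ultimately show "ereal B \<le> lf_conjugate f w" unfolding lhs
        by (metis (mono_tags, lifting) SUP_upper2 UNIV_I order_trans)
    qed
    then show ?thesis unfolding c_def[symmetric] using False by (simp only: if_False)
  qed
qed

end
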